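(* Let $k\ge 1$ and let $G$ be a maximal $k$-degenerate graph with at least $k+2$ vertices. Then no two vertices of degree exactly $k$ in $G$ are adjacent.
   Context: $G$ is a finite simple undirected graph. For a vertex ordering $\phi:V\to\{1,\dots,|V|\}$ and a vertex $v$, let $d_p(v)$ be the number of neighbours $u$ of $v$ with $\phi(u)<\phi(v)$. $G$ is a maximal $k$-degenerate graph if it has a vertex ordering $\phi$ with $d_p(v)=\min(k,\phi(v)-1)$ for every vertex $v$. *)

theory Defs
  imports Main
begin

definition simple_graph :: "'a set \<Rightarrow> ('a \<Rightarrow> 'a \<Rightarrow> bool) \<Rightarrow> bool" where
  "simple_graph V E \<longleftrightarrow> finite V \<and> (\<forall>u v. E u v \<longrightarrow> u \<in> V \<and> v \<in> V) \<and>
     (\<forall>u v. E u v \<longrightarrow> E v u) \<and> (\<forall>v. \<not> E v v)"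

definition degree :: "'a set \<Rightarrow> ('a \<Rightarrow> 'a \<Rightarrow> bool) \<Rightarrow> 'a \<Rightarrow> nat" where
  "degree V E v = card {u \<in> V. E v u}"

definition pred_degree :: "'a set \<Rightarrow> ('a \<Rightarrow> 'a \<Rightarrow> bool) \<Rightarrow> ('a \<Rightarrow> nat) \<Rightarrow> 'a \<Rightarrow> nat" where
  "pred_degree V E phi v = card {u \<in> V. E v u \<and> phi u < phi v}"

definition maximal_k_degenerate :: "nat \<Rightarrow> 'a set \<Rightarrow> ('a \<Rightarrow> 'a \<Rightarrow> bool) \<Rightarrow> bool" where
  "maximal_k_degenerate k V E \<longleftrightarrow> simple_graph V E \<and>
     (\<exists>phi. bij_betw phi V {1..card V} \<and>
        (\<forall>v\<in>V. pred_degree V E phi v = min k (phi v - 1)))"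

end

theory Submission
  imports Defs
begin

theorem mainTheorem12:
  fixes V :: "'a set" and E :: "'a \<Rightarrow> 'a \<Rightarrow> bool" and k :: nat
  assumes "k \<ge> 1"
    and "maximal_k_degenerate k V E"
    and "card V \<ge> k + 2"
  shows "\<forall>u\<in>V. \<forall>v\<in>V. degree V E u = k \<and> degree V E v = k \<longrightarrow> \<not> E u v"
proof -
  define n where "n = card V"
  have sg: "simple_graph V E" using assms(2) unfolding maximal_k_degenerate_def by blast
  then have fin: "finite V" and inV: "\<And>u v. E u v \<Longrightarrow> u \<in> V \<and> v \<in> V"
    and sym: "\<And>u v. E u v \<Longrightarrow> E v u" and irr: "\<And>v. \<not> E v v"
    unfolding simple_graph_def by blast+
  obtain phi where bij: "bij_betw phi V {1..n}"
    and pd: "\<And>v. v \<in> V \<Longrightarrow> pred_degree V E phi v = min k (phi v - 1)"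
    using assms(2) unfolding maximal_k_degenerate_def n_def by blast
  have inj: "inj_on phi V" and img: "phi ` V = {1..n}" using bij unfolding bij_betw_def by auto
  have rng: "\<And>y. y \<in> V \<Longrightarrow> 1 \<le> phi y \<and> phi y \<le> n" using img by auto
  have Lcard: "card {y\<in>V. phi y \<le> m} = m" if "m \<le> n" for m
  proof -
    have "phi ` {y\<in>V. phi y \<le> m} = {1..m}"
    proof
      show "phi ` {y\<in>V. phi y \<le> m} \<subseteq> {1..m}" using rng by auto
      show "{1..m} \<subseteq> phi ` {y\<in>V. phi y \<le> m}"
      proof
        fix i assume i: "i \<in> {1..m}"
        then have "i \<in> phi ` V" using img that by auto
        then obtain y where "y \<in> V" "i = phi y" by blast
        then show "i \<in> phi ` {y\<in>V. phi y \<le> m}" using i by auto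
      qed
    qed
    moreover have "inj_on phi {y\<in>V. phi y \<le> m}" using inj by (rule inj_on_subset) auto
    ultimately show ?thesis using card_image by fastforce
  qed
  have Lpred: "{y\<in>V. E x y \<and> phi y < phi x} = {y\<in>V. phi y < phi x}"
    if x: "x \<in> V" "phi x \<le> k+1" for x
  proof -
    have c1: "card {y\<in>V. E x y \<and> phi y < phi x} = phi x - 1"
      using pd[OF x(1)] x(2) unfolding pred_degree_def by simp
    have "{y\<in>V. phi y < phi x} = {y\<in>V. phi y \<le> phi x - 1}" using rng x(1) by force
    moreover have "phi x - 1 \<le> n" using rng[OF x(1)] by linarith
    ultimately have c2: "card {y\<in>V. phi y < phi x} = phi x - 1" using Lcard by simp
    show ?thesis
      by (rule card_subset_eq) (use fin c1 c2 in auto)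
  qed
  have clique: "E x y" if "x \<in> V" "y \<in> V" "phi x \<le> k+1" "phi y \<le> k+1" "x \<noteq> y" for x y
  proof -
    have "phi x \<noteq> phi y" using inj that by (meson inj_on_contraD)
    then consider "phi y < phi x" | "phi x < phi y" by linarith
    then show ?thesis
    proof cases
      case 1 then show ?thesis using Lpred[of x] that by blast
    next
      case 2 then have "E y x" using Lpred[of y] that by blast
      then show ?thesis using sym by blast
    qed
  qed
  define S where "S = {y\<in>V. phi y \<le> k+1}"
  have cS: "card S = k+1" unfolding S_def using Lcard assms(3) n_def by simp
  have finS: "finite S" using fin S_def by simp
  have bound1: "degree V E x \<ge> k+1"
    if "x \<in> V" "phi x \<le> k+1" "z \<in> V" "E x z" "phi z > k+1" for x z
  proof -
    have sub: "insert z (S - {x}) \<subseteq> {u\<in>V. E x u}" using clique that S_def by auto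
    have "x \<in> S" using that S_def by simp
    then have "card (insert z (S - {x})) = k+1" using that cS finS S_def by simp
    moreover have "card (insert z (S - {x})) \<le> card {u\<in>V. E x u}"
      by (rule card_mono) (use fin sub in auto)
    ultimately show ?thesis unfolding degree_def by simp
  qed
  have bound2: "degree V E x \<ge> k+1"
    if "x \<in> V" "phi x \<ge> k+1" "z \<in> V" "E x z" "phi z > phi x" for x z
  proof -
    let ?P = "{y\<in>V. E x y \<and> phi y < phi x}"
    have "card ?P = k" using pd[OF that(1)] that(2) unfolding pred_degree_def by simp
    moreover have "z \<notin> ?P" using that by simp
    moreover have "finite ?P" using fin by simp
    ultimately have c: "card (insert z ?P) = k+1" by simp
    have sub: "insert z ?P \<subseteq> {u\<in>V. E x u}" using that by auto
    have "card (insert z ?P) \<le> card {u\<in>V. E x u}"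
      by (rule card_mono) (use fin sub in auto)
    then show ?thesis unfolding degree_def using c by simp
  qed
  have main: False if u: "u \<in> V" "v \<in> V" "degree V E u = k" "degree V E v = k" "E u v"
    "phi u < phi v" for u v
  proof (cases "phi u \<ge> k+1")
    case True then show False using bound2[of u v] u by simp
  next
    case False
    show False
    proof (cases "phi v > k+1")
      case True then show False using bound1[of u v] u False by simp
    next
      case vle: False
      have "k+2 \<in> phi ` V" using img assms(3) n_def by simp
      then obtain w where w: "w \<in> V" "phi w = k+2" by (metis imageE)
      let ?P = "{y\<in>V. E w y \<and> phi y < phi w}"
      have cP: "card ?P = k" using pd[OF w(1)] w(2) unfolding pred_degree_def by simp
      show False
      proof (cases "E w u \<or> E w v")
        case True
        then show False
        proof
          assume "E w u" then show False using bound1[of u w] u w sym False by simp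
        next
          assume "E w v" then show False using bound1[of v w] u w sym vle by simp
        qed
      next
        case nE: False
        have sub: "?P \<subseteq> S - {u, v}" using nE w S_def by auto
        have "u \<noteq> v" using u irr by blast
        then have "card (S - {u,v}) = k - 1" using cS finS u False vle S_def by simp
        then have "card ?P \<le> k - 1" using card_mono[OF _ sub] finS by simp
        then show False using cP assms(1) by simp
      qed
    qed
  qed
  show ?thesis
  proof (intro ballI impI notI)
    fix u v assume uv: "u \<in> V" "v \<in> V" "degree V E u = k \<and> degree V E v = k" "E u v"
    have "u \<noteq> v" using uv irr by blast
    then have "phi u \<noteq> phi v" using inj uv by (meson inj_on_contraD)
    then consider "phi u < phi v" | "phi v < phi u" by linarith
    then show False
    proof cases
      case 1 then show False using main[of u v] uv by blast
    next
      case 2 then show False using main[of v u] uv sym by blast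
    qed
  qed
qed

end
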